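(* Every universal distance matrix is weakly universal. There exist weakly universal distance matrices which are not universal.
   Context: $\mathcal R$ is the set of infinite real matrices $r=\{r_{i,j}\}_{i,j\ge1}$ with $r_{i,i}=0$, $r_{i,j}\ge0$, $r_{i,j}=r_{j,i}$, $r_{i,k}+r_{k,j}\ge r_{i,j}$; $\mathcal R_n$ is the analogous set of $n\times n$ matrices (with the usual topology of $\mathbb R^{n^2}$), and $p_n(r)$ is the upper-left $n\times n$ corner. $r$ is proper if $r_{i,j}>0$ for $i\neq j$. For $q\in\mathcal R_n$, $A(q)=\{a\in\mathbb R^n:|a_i-a_j|\le q_{i,j}\le a_i+a_j\ \forall i,j\}$. A proper $r\in\mathcal R$ is universal if for every $n$, every $a\in A(p_n(r))$ and every $\epsilon>0$ there is $m\in\mathbb N$ with $\max_{1\le i\le n}|r_{i,m}-a_i|<\epsilon$. A proper $r\in\mathcal R$ is weakly universal if for every $n$ the set of all submatrices $\{r_{i_k,i_s}\}_{k,s=1}^n$, over all $n$-tuples of (distinct) indices $i_1,\dots,i_n\in\mathbb N$, is dense in $\mathcal R_n$. *)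

theory Defs
  imports "HOL-Analysis.Analysis"
begin

text \<open>Infinite distance matrices are modelled as r :: nat => nat => real,
  indexed from 0 (index i here corresponds to index i+1 in the paper).\<close>

definition dist_matrix :: "(nat \<Rightarrow> nat \<Rightarrow> real) \<Rightarrow> bool" where
  "dist_matrix r \<longleftrightarrow>
     (\<forall>i. r i i = 0) \<and> (\<forall>i j. r i j \<ge> 0) \<and> (\<forall>i j. r i j = r j i) \<and>
     (\<forall>i j k. r i k + r k j \<ge> r i j)"

definition dist_matrix_n :: "nat \<Rightarrow> (nat \<Rightarrow> nat \<Rightarrow> real) \<Rightarrow> bool" where
  "dist_matrix_n n q \<longleftrightarrow>
     (\<forall>i<n. q i i = 0) \<and> (\<forall>i<n. \<forall>j<n. q i j \<ge> 0) \<and> (\<forall>i<n. \<forall>j<n. q i j = q j i) \<and>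
     (\<forall>i<n. \<forall>j<n. \<forall>k<n. q i k + q k j \<ge> q i j)"

definition proper :: "(nat \<Rightarrow> nat \<Rightarrow> real) \<Rightarrow> bool" where
  "proper r \<longleftrightarrow> (\<forall>i j. i \<noteq> j \<longrightarrow> r i j > 0)"

text \<open>A(q) for an n x n matrix q; vectors a are functions, only a i for i < n matter.\<close>
definition A_set :: "nat \<Rightarrow> (nat \<Rightarrow> nat \<Rightarrow> real) \<Rightarrow> (nat \<Rightarrow> real) set" where
  "A_set n q = {a. \<forall>i<n. \<forall>j<n. \<bar>a i - a j\<bar> \<le> q i j \<and> q i j \<le> a i + a j}"

text \<open>The corner p_n(r) is r restricted to indices < n; A(p_n r) = A_set n r.\<close>
definition universal :: "(nat \<Rightarrow> nat \<Rightarrow> real) \<Rightarrow> bool" where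
  "universal r \<longleftrightarrow> dist_matrix r \<and> proper r \<and>
     (\<forall>n. \<forall>a \<in> A_set n r. \<forall>\<epsilon>>0. \<exists>m. \<forall>i<n. \<bar>r i m - a i\<bar> < \<epsilon>)"

text \<open>Density in R_n (topology of R^(n^2)) written out with sup-distance balls.\<close>
definition weakly_universal :: "(nat \<Rightarrow> nat \<Rightarrow> real) \<Rightarrow> bool" where
  "weakly_universal r \<longleftrightarrow> dist_matrix r \<and> proper r \<and>
     (\<forall>n q. dist_matrix_n n q \<longrightarrow> (\<forall>\<epsilon>>0. \<exists>idx :: nat \<Rightarrow> nat. inj_on idx {..<n} \<and>
        (\<forall>k<n. \<forall>s<n. \<bar>r (idx k) (idx s) - q k s\<bar> < \<epsilon>)))"

end

theory Submission
  imports Defs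
begin

definition pert :: "(nat \<Rightarrow> nat \<Rightarrow> real) \<Rightarrow> real \<Rightarrow> nat \<Rightarrow> nat \<Rightarrow> real" where
  "pert q c = (\<lambda>i j. if i = j then 0 else q i j + c)"

lemma pert_dm:
  assumes "dist_matrix_n n q" "c \<ge> 0"
  shows "dist_matrix_n n (pert q c)"
  using assms unfolding dist_matrix_n_def pert_def
  apply (intro conjI allI impI)
  apply auto
  apply (smt (verit))+
  done

lemma dm_mono: "dist_matrix_n (Suc n) q \<Longrightarrow> dist_matrix_n n q"
  unfolding dist_matrix_n_def by auto

lemma ext_A:
  fixes n :: nat
  assumes dm: "dist_matrix r" and n: "n > 0"
    and h: "\<And>k l. k < n \<Longrightarrow> l < n \<Longrightarrow> \<bar>d k - d l\<bar> \<le> r (idx k) (idx l) \<and> r (idx k) (idx l) \<le> d k + d l"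
  defines "a \<equiv> (\<lambda>i. Min ((\<lambda>k. d k + r i (idx k)) ` {..<n}))"
  shows "a \<in> A_set N r" and "\<And>k. k < n \<Longrightarrow> a (idx k) = d k"
proof -
  have fin: "finite ((\<lambda>k. d k + r i (idx k)) ` {..<n})" for i by (intro finite_imageI) simp
  have ne: "(\<lambda>k. d k + r i (idx k)) ` {..<n} \<noteq> {}" for i using n by auto
  have le: "a i \<le> d k + r i (idx k)" if "k < n" for i k
    unfolding a_def using that by (intro Min_le) auto
  have ex: "\<exists>k<n. a i = d k + r i (idx k)" for i
  proof -
    have "a i \<in> (\<lambda>k. d k + r i (idx k)) ` {..<n}" unfolding a_def using Min_in[OF fin ne] by blast
    then show ?thesis by auto
  qed
  have tri: "r i k + r k j \<ge> r i j" and sym: "r i j = r j i" and z: "r i i = 0" and nn: "r i j \<ge> 0" for i j k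
    using dm unfolding dist_matrix_def by auto
  have lip: "a i - a j \<le> r i j" for i j
  proof -
    obtain k where k: "k < n" "a j = d k + r j (idx k)" using ex by blast
    have "a i \<le> d k + r i (idx k)" using le k by auto
    moreover have "r i (idx k) \<le> r i j + r j (idx k)" using tri by auto
    ultimately show ?thesis using k by linarith
  qed
  have up: "r i j \<le> a i + a j" for i j
  proof -
    obtain k where k: "k < n" "a i = d k + r i (idx k)" using ex by blast
    obtain l where l: "l < n" "a j = d l + r j (idx l)" using ex by blast
    have "r i j \<le> r i (idx k) + r (idx k) j" using tri by auto
    moreover have "r (idx k) j \<le> r (idx k) (idx l) + r (idx l) j" using tri by auto
    moreover have "r (idx l) j = r j (idx l)" using sym by auto
    moreover have "r (idx k) (idx l) \<le> d k + d l" using h k l by auto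
    ultimately show ?thesis using k l by linarith
  qed
  show "a \<in> A_set N r"
    unfolding A_set_def using lip up by (auto simp: abs_le_iff) (metis sym)
  show "a (idx k) = d k" if "k < n" for k
  proof -
    have "a (idx k) \<le> d k" using le[OF that, of "idx k"] z by simp
    moreover obtain l where l: "l < n" "a (idx k) = d l + r (idx k) (idx l)" using ex by blast
    moreover have "\<bar>d l - d k\<bar> \<le> r (idx l) (idx k)" using h l that by auto
    ultimately show ?thesis using sym[of "idx k" "idx l"] by (simp add: abs_le_iff)
  qed
qed

lemma univ_approx:
  assumes U: "universal r"
  shows "dist_matrix_n n q \<Longrightarrow> \<epsilon> > 0 \<Longrightarrow> \<exists>idx :: nat \<Rightarrow> nat. inj_on idx {..<n} \<and>
        (\<forall>k<n. \<forall>s<n. \<bar>r (idx k) (idx s) - q k s\<bar> < \<epsilon>)"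
proof (induction n arbitrary: q \<epsilon>)
  case 0
  then show ?case by auto
next
  case (Suc n)
  have dm: "dist_matrix r" using U unfolding universal_def by auto
  have tri: "r i k + r k j \<ge> r i j" and sym: "r i j = r j i" and z: "r i i = 0" and nn: "r i j \<ge> 0" for i j k
    using dm unfolding dist_matrix_def by auto
  have qtri: "q i k + q k j \<ge> q i j" and qsym: "q i j = q j i" and qz: "q i i = 0"
    if "i < Suc n" "j < Suc n" "k < Suc n" for i j k
    using Suc.prems(1) that unfolding dist_matrix_n_def by auto
  have qnn: "q i j \<ge> 0" if "i < Suc n" "j < Suc n" for i j
    using Suc.prems(1) that unfolding dist_matrix_n_def by auto
  show ?case
  proof (cases "n = 0")
    case True
    then show ?thesis using Suc.prems by (intro exI[of _ "\<lambda>_. 0"]) (auto simp: z qz inj_on_def)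
  next
    case False
    define c where "c = \<epsilon> / 2"
    have c: "c > 0" using Suc.prems c_def by auto
    define q' where "q' = pert q c"
    have "dist_matrix_n n q'" unfolding q'_def using pert_dm[OF Suc.prems(1)] c dm_mono by auto
    from Suc.IH[OF this, of "\<epsilon>/4"] Suc.prems obtain idx where
      inj: "inj_on idx {..<n}" and ap: "\<And>k s. k < n \<Longrightarrow> s < n \<Longrightarrow> \<bar>r (idx k) (idx s) - q' k s\<bar> < \<epsilon>/4"
      by auto
    define d where "d = (\<lambda>k. q k n + c)"
    have h: "\<bar>d k - d l\<bar> \<le> r (idx k) (idx l) \<and> r (idx k) (idx l) \<le> d k + d l" if "k < n" "l < n" for k l
    proof (cases "k = l")
      case True
      then show ?thesis using z qnn[of k n] that c by (simp add: d_def)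
    next
      case False
      have a1: "\<bar>r (idx k) (idx l) - (q k l + c)\<bar> < \<epsilon>/4" using ap[OF that] False by (simp add: q'_def pert_def)
      have "q k n \<le> q k l + q l n" "q l n \<le> q l k + q k n" "q k l \<le> q k n + q n l"
        using qtri that by auto
      moreover have "q l k = q k l" "q n l = q l n" using qsym[of _ _ 0] that by auto
      moreover have "r (idx k) (idx l) > q k l + c - \<epsilon>/4" "r (idx k) (idx l) < q k l + c + \<epsilon>/4"
        using a1 unfolding abs_less_iff by linarith+
      ultimately show ?thesis using c c_def unfolding d_def abs_le_iff by linarith
    qed
    define N where "N = Suc (Max (idx ` {..<n}))"
    have idxN: "idx k < N" if "k < n" for k
      unfolding N_def using that by (simp add: le_imp_less_Suc)
    define a where "a = (\<lambda>i. Min ((\<lambda>k. d k + r i (idx k)) ` {..<n}))"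
    have n0: "n > 0" using False by auto
    have aA: "a \<in> A_set N r" unfolding a_def by (rule ext_A(1)[OF dm n0 h])
    have aval: "a (idx k) = d k" if "k < n" for k unfolding a_def by (rule ext_A(2)[OF dm n0 h that])
    obtain m where m: "\<And>i. i < N \<Longrightarrow> \<bar>r i m - a i\<bar> < \<epsilon>/4"
      using U aA Suc.prems(2) unfolding universal_def by (meson zero_less_divide_iff zero_less_numeral)
    have mk: "\<bar>r (idx k) m - (q k n + c)\<bar> < \<epsilon>/4" if "k < n" for k
      using m[OF idxN[OF that]] aval[OF that] by (simp add: d_def)
    have qkn: "q k n \<ge> 0" if "k < n" for k using Suc.prems(1) that unfolding dist_matrix_n_def by auto
    have mne: "m \<noteq> idx k" if "k < n" for k
    proof
      assume "m = idx k"
      then show False using mk[OF that] z qkn[OF that] c_def Suc.prems(2) by (auto simp: abs_less_iff)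
    qed
    define idx' where "idx' = idx(n := m)"
    have "inj_on idx' {..<Suc n}"
      unfolding idx'_def using inj mne by (auto simp: inj_on_def lessThan_Suc)
    moreover have "\<bar>r (idx' k) (idx' s) - q k s\<bar> < \<epsilon>" if ks: "k < Suc n" "s < Suc n" for k s
    proof -
      consider "k < n" "s < n" | "k < n" "s = n" | "k = n" "s < n" | "k = n" "s = n"
        using ks by (metis less_Suc_eq)
      then show ?thesis
      proof cases
        case 1
        show ?thesis
        proof (cases "k = s")
          case True
          then show ?thesis using 1 z qz[of s s 0] Suc.prems(2) by (simp add: idx'_def)
        next
          case False
          have "\<bar>r (idx k) (idx s) - (q k s + c)\<bar> < \<epsilon>/4" using ap[OF 1] False by (simp add: q'_def pert_def)
          then have "r (idx k) (idx s) - (q k s + c) < \<epsilon>/4" "(q k s + c) - r (idx k) (idx s) < \<epsilon>/4"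
            unfolding abs_less_iff by linarith+
          then show ?thesis using 1 c c_def unfolding idx'_def abs_less_iff by simp
        qed
      next
        case 2
        have "r (idx k) m - (q k n + c) < \<epsilon>/4" "(q k n + c) - r (idx k) m < \<epsilon>/4"
          using mk[of k] 2 unfolding abs_less_iff by linarith+
        then show ?thesis using 2 c c_def mne[of k] unfolding idx'_def abs_less_iff by simp
      next
        case 3
        have "r (idx s) m - (q s n + c) < \<epsilon>/4" "(q s n + c) - r (idx s) m < \<epsilon>/4"
          using mk[of s] 3 unfolding abs_less_iff by linarith+
        then show ?thesis using 3 c c_def sym[of m "idx s"] qsym[of n s 0] unfolding idx'_def abs_less_iff by simp
      next
        case 4
        then show ?thesis using z qz[of n n 0] Suc.prems(2) by (auto simp: idx'_def)
      qed
    qed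
    ultimately show ?thesis by blast
  qed
qed

lemma part1: "universal r \<Longrightarrow> weakly_universal r"
  unfolding weakly_universal_def using univ_approx[of r]
  by (auto simp: universal_def)


definition fsupp :: "(nat \<Rightarrow> real) \<Rightarrow> bool" where
  "fsupp x \<longleftrightarrow> (\<exists>N. \<forall>i\<ge>N. x i = 0)"

definition sd :: "(nat \<Rightarrow> real) \<Rightarrow> (nat \<Rightarrow> real) \<Rightarrow> real" where
  "sd x y = Max (range (\<lambda>i. \<bar>x i - y i\<bar>))"

definition PP :: "(nat \<Rightarrow> real) set" where
  "PP = {x. x 0 = 0 \<and> (\<forall>i. x i \<in> \<rat>) \<and> fsupp x}"

definition apex :: "nat \<Rightarrow> real" where
  "apex = (\<lambda>i. if i = 0 then 1 else 0)"

definition ptt :: "nat \<Rightarrow> nat \<Rightarrow> real" where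
  "ptt i = (if i = 0 then apex else from_nat_into PP (i - 1))"

definition rr :: "nat \<Rightarrow> nat \<Rightarrow> real" where
  "rr i j = sd (ptt i) (ptt j)"

lemma fin_range:
  assumes "fsupp x" "fsupp y"
  shows "finite (range (\<lambda>i. \<bar>x i - y i\<bar>))"
proof -
  obtain N1 where N1: "\<forall>i\<ge>N1. x i = 0" using assms(1) unfolding fsupp_def by blast
  obtain N2 where N2: "\<forall>i\<ge>N2. y i = 0" using assms(2) unfolding fsupp_def by blast
  have "range (\<lambda>i. \<bar>x i - y i\<bar>) \<subseteq> (\<lambda>i. \<bar>x i - y i\<bar>) ` {..max N1 N2}"
  proof
    fix t assume "t \<in> range (\<lambda>i. \<bar>x i - y i\<bar>)"
    then obtain i where t: "t = \<bar>x i - y i\<bar>" by auto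
    show "t \<in> (\<lambda>i. \<bar>x i - y i\<bar>) ` {..max N1 N2}"
    proof (cases "i \<le> max N1 N2")
      case True then show ?thesis using t by auto
    next
      case False
      then have "t = \<bar>x (max N1 N2) - y (max N1 N2)\<bar>" using t N1 N2 by auto
      then show ?thesis by auto
    qed
  qed
  then show ?thesis by (rule finite_subset) simp
qed

lemma sd_ge: "fsupp x \<Longrightarrow> fsupp y \<Longrightarrow> \<bar>x i - y i\<bar> \<le> sd x y"
  unfolding sd_def by (rule Max_ge) (auto simp: fin_range)

lemma sd_ex: "fsupp x \<Longrightarrow> fsupp y \<Longrightarrow> \<exists>i. sd x y = \<bar>x i - y i\<bar>"
proof -
  assume a: "fsupp x" "fsupp y"
  have "sd x y \<in> range (\<lambda>i. \<bar>x i - y i\<bar>)" unfolding sd_def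
    by (rule Max_in) (auto simp: fin_range[OF a])
  then show ?thesis by auto
qed

lemma sd_le: "fsupp x \<Longrightarrow> fsupp y \<Longrightarrow> (\<And>i. \<bar>x i - y i\<bar> \<le> b) \<Longrightarrow> sd x y \<le> b"
  using sd_ex by metis

lemma sd_self: "fsupp x \<Longrightarrow> sd x x = 0"
  using sd_ex[of x x] by auto

lemma sd_sym: "sd x y = sd y x"
  unfolding sd_def by (simp add: abs_minus_commute)

lemma sd_tri: "fsupp x \<Longrightarrow> fsupp y \<Longrightarrow> fsupp z \<Longrightarrow> sd x y \<le> sd x z + sd z y"
proof -
  assume a: "fsupp x" "fsupp y" "fsupp z"
  obtain i where i: "sd x y = \<bar>x i - y i\<bar>" using sd_ex a by blast
  have "\<bar>x i - y i\<bar> \<le> \<bar>x i - z i\<bar> + \<bar>z i - y i\<bar>" by linarith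
  then show ?thesis using i sd_ge[of x z i] sd_ge[of z y i] a by linarith
qed

lemma PP_countable: "countable PP"
proof -
  define f where "f = (\<lambda>xs::rat list. \<lambda>i::nat. if i < length xs then real_of_rat (xs ! i) else 0)"
  have "PP \<subseteq> range f"
  proof
    fix x assume "x \<in> PP"
    then have x0: "\<forall>i. x i \<in> \<rat>" and fs: "fsupp x" unfolding PP_def by auto
    obtain N where N: "\<forall>i\<ge>N. x i = 0" using fs unfolding fsupp_def by blast
    define xs where "xs = map (\<lambda>i. SOME r. x i = of_rat r) [0..<N]"
    have "of_rat (SOME r. x i = of_rat r) = x i" for i
    proof -
      have "\<exists>r. x i = of_rat r" using x0 unfolding Rats_def by auto
      then show ?thesis by (metis (mono_tags) someI_ex)
    qed
    then have "f xs = x" unfolding f_def xs_def using N by (auto simp: fun_eq_iff)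
    then show "x \<in> range f" by auto
  qed
  then show ?thesis by (rule countable_subset) simp
qed

lemma PP_infinite: "infinite PP"
proof
  assume fin: "finite PP"
  define g where "g = (\<lambda>k::nat. \<lambda>i::nat. if i = 1 then real k else 0)"
  have "g ` UNIV \<subseteq> PP" unfolding g_def PP_def fsupp_def
    by (auto intro: exI[of _ 2])
  moreover have "inj g" unfolding g_def inj_def by (metis of_nat_eq_iff)
  ultimately have "finite (UNIV :: nat set)"
    using fin by (meson finite_imageD finite_subset)
  then show False by simp
qed

lemma PP_ne: "PP \<noteq> {}" using PP_infinite by auto

lemma ptt_PP: "i > 0 \<Longrightarrow> ptt i \<in> PP"
  unfolding ptt_def using from_nat_into[OF PP_ne] by simp

lemma fsupp_ptt: "fsupp (ptt i)"
  apply (cases "i = 0")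
   apply (simp add: ptt_def apex_def fsupp_def) apply (rule exI[of _ 1]) apply simp
  using ptt_PP[of i] by (simp add: PP_def)

lemma ptt_inj: "inj ptt"
proof (rule injI)
  fix i j assume e: "ptt i = ptt j"
  have bij: "bij_betw (from_nat_into PP) UNIV PP"
    by (rule bij_betw_from_nat_into[OF PP_countable PP_infinite])
  show "i = j"
  proof (cases "i = 0"; cases "j = 0")
    assume "i = 0" "j = 0" then show ?thesis by simp
  next
    assume a: "i = 0" "j \<noteq> 0"
    then have "ptt j \<in> PP" using ptt_PP by simp
    then have "ptt j 0 = 0" by (simp add: PP_def)
    moreover have "ptt i 0 = 1" using a by (simp add: ptt_def apex_def)
    ultimately show ?thesis using e by simp
  next
    assume a: "i \<noteq> 0" "j = 0"
    then have "ptt i \<in> PP" using ptt_PP by simp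
    then have "ptt i 0 = 0" by (simp add: PP_def)
    moreover have "ptt j 0 = 1" using a by (simp add: ptt_def apex_def)
    ultimately show ?thesis using e by simp
  next
    assume a: "i \<noteq> 0" "j \<noteq> 0"
    then have "from_nat_into PP (i - 1) = from_nat_into PP (j - 1)" using e by (simp add: ptt_def)
    then have "i - 1 = j - 1" using bij unfolding bij_betw_def inj_def by blast
    then show ?thesis using a by simp
  qed
qed

lemma ptt_surj: "w \<in> PP \<Longrightarrow> ptt (Suc (inv_into UNIV (from_nat_into PP) w)) = w"
  unfolding ptt_def using range_from_nat_into[OF PP_ne PP_countable]
  by (simp add: f_inv_into_f)

lemma rr_dm: "dist_matrix rr"
  unfolding dist_matrix_def rr_def
  using sd_self sd_sym sd_tri fsupp_ptt sd_ge[of _ _ 0]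
  by (smt (verit))

lemma rr_proper: "proper rr"
  unfolding proper_def rr_def
proof (intro allI impI)
  fix i j :: nat assume "i \<noteq> j"
  then have "ptt i \<noteq> ptt j" using ptt_inj by (meson injD)
  then obtain t where "ptt i t \<noteq> ptt j t" by auto
  then show "sd (ptt i) (ptt j) > 0" using sd_ge[of "ptt i" "ptt j" t, OF fsupp_ptt fsupp_ptt] by linarith
qed

lemma rr_not_universal: "\<not> universal rr"
proof
  assume U: "universal rr"
  define a where "a = (\<lambda>i::nat. (1/2::real))"
  have "a \<in> A_set 1 rr" unfolding A_set_def a_def rr_def using sd_self fsupp_ptt by auto
  then obtain m where m: "\<bar>rr 0 m - 1/2\<bar> < 1/2" using U unfolding universal_def a_def
    by (metis less_one zero_less_divide_1_iff zero_less_numeral)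
  show False
  proof (cases "m = 0")
    case True then show False using m sd_self fsupp_ptt by (simp add: rr_def)
  next
    case False
    then have "ptt m 0 = 0" using ptt_PP by (simp add: PP_def)
    moreover have "ptt 0 0 = 1" by (simp add: ptt_def apex_def)
    ultimately have "1 \<le> rr 0 m" using sd_ge[of "ptt 0" "ptt m" 0] fsupp_ptt
      by (simp add: rr_def)
    then show False using m by (simp add: abs_less_iff)
  qed
qed


lemma rr_approx:
  assumes q: "dist_matrix_n n q" and e: "\<epsilon> > 0"
  shows "\<exists>idx :: nat \<Rightarrow> nat. inj_on idx {..<n} \<and>
        (\<forall>k<n. \<forall>s<n. \<bar>rr (idx k) (idx s) - q k s\<bar> < \<epsilon>)"
proof -
  define c where "c = \<epsilon> / 2"
  define \<delta> where "\<delta> = \<epsilon> / 8"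
  have c: "c > 0" "\<delta> > 0" using e c_def \<delta>_def by auto
  define q' where "q' = pert q c"
  have q': "dist_matrix_n n q'" unfolding q'_def using pert_dm[OF q] c by auto
  have q'tri: "q' i k + q' k j \<ge> q' i j" and q'sym: "q' i j = q' j i" and q'z: "q' i i = 0"
    and q'nn: "q' i j \<ge> 0"
    if "i < n" "j < n" "k < n" for i j k
    using q' that unfolding dist_matrix_n_def by auto
  have "\<forall>k i. \<exists>t. t \<in> \<rat> \<and> \<bar>t - q' k (i - 1)\<bar> < \<delta>"
  proof (intro allI)
    fix k i
    obtain t where "t \<in> \<rat>" "q' k (i - 1) - \<delta> < t" "t < q' k (i - 1) + \<delta>"
      using Rats_dense_in_real[of "q' k (i - 1) - \<delta>" "q' k (i - 1) + \<delta>"] c by auto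
    then show "\<exists>t. t \<in> \<rat> \<and> \<bar>t - q' k (i - 1)\<bar> < \<delta>" by (intro exI[of _ t]) (auto simp: abs_less_iff)
  qed
  then obtain R where R: "\<And>k i. R k i \<in> \<rat>" "\<And>k i. \<bar>R k i - q' k (i - 1)\<bar> < \<delta>" by metis
  define w where "w = (\<lambda>k i. if 1 \<le> i \<and> i \<le> n then R k i else 0)"
  have wPP: "w k \<in> PP" for k
    unfolding PP_def fsupp_def w_def using R(1) by (auto intro!: exI[of _ "Suc n"])
  have wfs: "fsupp (w k)" for k using wPP[of k] by (simp add: PP_def)
  have up: "sd (w k) (w s) \<le> q' k s + 2 * \<delta>" if "k < n" "s < n" for k s
  proof (rule sd_le[OF wfs wfs])
    fix i
    show "\<bar>w k i - w s i\<bar> \<le> q' k s + 2 * \<delta>"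
    proof (cases "1 \<le> i \<and> i \<le> n")
      case True
      then have i1: "i - 1 < n" by auto
      have "q' k (i - 1) \<le> q' k s + q' s (i - 1)" "q' s (i - 1) \<le> q' s k + q' k (i - 1)"
        using q'tri that i1 by auto
      moreover have "q' s k = q' k s" using q'sym[of s k 0] that by auto
      moreover have "R k i - q' k (i - 1) < \<delta>" "q' k (i - 1) - R k i < \<delta>"
        "R s i - q' s (i - 1) < \<delta>" "q' s (i - 1) - R s i < \<delta>"
        using R(2)[of k i] R(2)[of s i] unfolding abs_less_iff by linarith+
      ultimately show ?thesis using True unfolding w_def abs_le_iff by simp
    next
      case False
      then have "w k i = 0" "w s i = 0" by (auto simp: w_def)
      then show ?thesis using q'nn[of k s 0] that c by simp
    qed
  qed
  have low: "sd (w k) (w s) \<ge> q' k s - 2 * \<delta>" if "k < n" "s < n" for k s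
  proof -
    have "\<bar>w k (Suc s) - w s (Suc s)\<bar> \<le> sd (w k) (w s)" by (rule sd_ge[OF wfs wfs])
    moreover have "w k (Suc s) = R k (Suc s)" "w s (Suc s) = R s (Suc s)" using that by (auto simp: w_def)
    moreover have "R k (Suc s) - q' k s < \<delta>" "q' k s - R k (Suc s) < \<delta>"
        "R s (Suc s) - q' s s < \<delta>" "q' s s - R s (Suc s) < \<delta>"
        using R(2)[of k "Suc s"] R(2)[of s "Suc s"] unfolding abs_less_iff by simp_all
    moreover have "q' s s = 0" using q'z[of s s 0] that by auto
    ultimately show ?thesis by linarith
  qed
  define idx where "idx = (\<lambda>k. Suc (inv_into UNIV (from_nat_into PP) (w k)))"
  have pidx: "ptt (idx k) = w k" for k unfolding idx_def by (rule ptt_surj[OF wPP])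
  have rid: "rr (idx k) (idx s) = sd (w k) (w s)" for k s by (simp add: rr_def pidx)
  have "inj_on idx {..<n}"
  proof (rule inj_onI)
    fix k s assume ks: "k \<in> {..<n}" "s \<in> {..<n}" "idx k = idx s"
    show "k = s"
    proof (rule ccontr)
      assume ne: "k \<noteq> s"
      have "w k = w s" using ks pidx by metis
      then have "sd (w k) (w s) = 0" using sd_self wfs by simp
      moreover have "q' k s = q k s + c" using ne by (simp add: q'_def pert_def)
      moreover have "q k s \<ge> 0" using q ks unfolding dist_matrix_n_def by auto
      ultimately show False using low[of k s] ks c_def \<delta>_def e by auto
    qed
  qed
  moreover have "\<bar>rr (idx k) (idx s) - q k s\<bar> < \<epsilon>" if "k < n" "s < n" for k s
  proof -
    have "\<bar>q' k s - q k s\<bar> \<le> c" using c q q'z[of k k 0] that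
      unfolding q'_def pert_def dist_matrix_n_def by auto
    then show ?thesis using up[OF that] low[OF that] rid[of k s] c_def \<delta>_def e
      unfolding abs_le_iff abs_less_iff by linarith
  qed
  ultimately show ?thesis by blast
qed

lemma rr_weakly: "weakly_universal rr"
  unfolding weakly_universal_def using rr_dm rr_proper rr_approx by blast

theorem lemma5:
  shows "(\<forall>r :: nat \<Rightarrow> nat \<Rightarrow> real. universal r \<longrightarrow> weakly_universal r) \<and>
         (\<exists>r :: nat \<Rightarrow> nat \<Rightarrow> real. weakly_universal r \<and> \<not> universal r)"
  using part1 rr_weakly rr_not_universal by blast

end
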